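(* For a real tensor $T\in\mathbb{R}^{n\times n\times n}$ of order 3, the following are equivalent: (i) $T\in\mathrm{OT}_n(\mathbb{R})$; (ii) for each of the three families of slices (the $x$-slices $X_1,\dots,X_n$, the $y$-slices $Y_1,\dots,Y_n$, and the $z$-slices $Z_1,\dots,Z_n$), denoting the family by $M_1,\dots,M_n$, the matrices $M_kM_l^T$ and $M_k^TM_l$ are symmetric for all $k,l\in\{1,\dots,n\}$.
   Context: Associate to $T$ the trilinear form $t(x,y,z)=\sum_{i,j,k}T_{ijk}x_iy_jz_k$. $\mathrm{OT}_n(K)$ is the set of tensors whose trilinear form can be written $t(x,y,z)=g(Ax,By,Cz)$ with $A,B,C\in M_n(K)$ orthogonal ($A^TA=\mathrm{Id}$ etc.) and $g(x,y,z)=\sum_{i=1}^n\alpha_ix_iy_iz_i$, $\alpha_i\in K$. Slices: $X_k=(T_{kjl})_{j,l}$ (matrix of the bilinear form $\partial t/\partial x_k$ in $(y,z)$), $Y_k=(T_{ikl})_{i,l}$ (matrix of $\partial t/\partial y_k$ in $(x,z)$), $Z_k=(T_{ijk})_{i,j}$ (matrix of $\partial t/\partial z_k$ in $(x,y)$). *)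

theory Defs
  imports "HOL-Analysis.Analysis"
begin

type_synonym 'n tensor3 = "real ^ 'n ^ 'n ^ 'n"

definition trilin :: "'n::finite tensor3 \<Rightarrow> real^'n \<Rightarrow> real^'n \<Rightarrow> real^'n \<Rightarrow> real" where
  "trilin T x y z = (\<Sum>i\<in>UNIV. \<Sum>j\<in>UNIV. \<Sum>k\<in>UNIV. T $ i $ j $ k * x $ i * y $ j * z $ k)"

definition diag_form :: "real^'n::finite \<Rightarrow> real^'n \<Rightarrow> real^'n \<Rightarrow> real^'n \<Rightarrow> real" where
  "diag_form \<alpha> x y z = (\<Sum>i\<in>UNIV. \<alpha> $ i * x $ i * y $ i * z $ i)"

definition OT :: "'n::finite tensor3 set" where
  "OT = {T. \<exists>A B C :: real^'n^'n. \<exists>\<alpha> :: real^'n.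
            orthogonal_matrix A \<and> orthogonal_matrix B \<and> orthogonal_matrix C \<and>
            (\<forall>x y z. trilin T x y z = diag_form \<alpha> (A *v x) (B *v y) (C *v z))}"

definition xslice :: "'n::finite tensor3 \<Rightarrow> 'n \<Rightarrow> real^'n^'n" where
  "xslice T k = (\<chi> j l. T $ k $ j $ l)"
definition yslice :: "'n::finite tensor3 \<Rightarrow> 'n \<Rightarrow> real^'n^'n" where
  "yslice T k = (\<chi> i l. T $ i $ k $ l)"
definition zslice :: "'n::finite tensor3 \<Rightarrow> 'n \<Rightarrow> real^'n^'n" where
  "zslice T k = (\<chi> i j. T $ i $ j $ k)"

definition symmetric_mat :: "real^'n^'n \<Rightarrow> bool" where
  "symmetric_mat M \<longleftrightarrow> transpose M = M"

definition slice_cond :: "('n::finite \<Rightarrow> real^'n^'n) \<Rightarrow> bool" where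
  "slice_cond M \<longleftrightarrow> (\<forall>k l. symmetric_mat (M k ** transpose (M l)) \<and>
                             symmetric_mat (transpose (M k) ** M l))"

end

theory Submission
  imports Defs
begin


definition onorm :: "(real^'n::finite) set \<Rightarrow> bool" where
  "onorm E \<longleftrightarrow> (\<forall>e\<in>E. norm e = 1) \<and> pairwise orthogonal E"

lemma onorm_card:
  fixes E :: "(real^'n::finite) set"
  assumes "onorm E" shows "finite E \<and> card E \<le> CARD('n)"
proof -
  have "0 \<notin> E" using assms by (auto simp: onorm_def)
  then have "independent E" using assms pairwise_orthogonal_independent by (auto simp: onorm_def)
  then show ?thesis using independent_bound by (metis DIM_cart DIM_real mult.right_neutral)
qed

lemma onorm_compl:
  fixes E :: "(real^'n::finite) set"
  assumes "onorm E" "card E < CARD('n)"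
  shows "\<exists>x. x \<noteq> 0 \<and> (\<forall>e\<in>E. x \<bullet> e = 0)"
proof -
  have "0 \<notin> E" using assms by (auto simp: onorm_def)
  then have "independent E" using assms pairwise_orthogonal_independent by (auto simp: onorm_def)
  then have "dim E < DIM(real^'n)" using assms dim_eq_card_independent by (metis DIM_cart DIM_real mult.right_neutral)
  then obtain x where "x \<noteq> 0" "\<And>y. y \<in> span E \<Longrightarrow> orthogonal x y"
    using orthogonal_to_subspace_exists by blast
  then show ?thesis by (metis orthogonal_def span_base)
qed

lemma onorm_max:
  fixes E0 :: "(real^'n::finite) set"
  assumes ext: "\<And>E. onorm E \<Longrightarrow> (\<forall>e\<in>E. P e) \<Longrightarrow> card E < CARD('n) \<Longrightarrow>
                  \<exists>x. norm x = 1 \<and> P x \<and> (\<forall>e\<in>E. x \<bullet> e = 0)"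
    and E0: "onorm E0" "\<forall>e\<in>E0. P e"
  shows "\<exists>E. E0 \<subseteq> E \<and> onorm E \<and> (\<forall>e\<in>E. P e) \<and> card E = CARD('n)"
proof -
  define K where "K = {E. E0 \<subseteq> E \<and> onorm E \<and> (\<forall>e\<in>E. P e)}"
  have "E0 \<in> K" using E0 by (auto simp: K_def)
  have fin: "finite (card ` K)"
    by (rule finite_subset[of _ "{..CARD('n)}"]) (auto simp: K_def dest: onorm_card)
  define m where "m = Max (card ` K)"
  have "m \<in> card ` K" unfolding m_def using fin \<open>E0 \<in> K\<close> by (intro Max_in) auto
  then obtain E where E: "E \<in> K" "card E = m" by auto
  have "card E \<ge> CARD('n)"
  proof (rule ccontr)
    assume "\<not> ?thesis"
    then obtain x where x: "norm x = 1" "P x" "\<forall>e\<in>E. x \<bullet> e = 0"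
      using ext[of E] E by (auto simp: K_def not_le)
    have "x \<notin> E" using x by (metis inner_eq_zero_iff norm_zero zero_neq_one)
    have "insert x E \<in> K" using E x
      by (auto simp: K_def onorm_def intro!: pairwise_orthogonal_insert simp: orthogonal_def)
    then have "card (insert x E) \<le> m" unfolding m_def using fin by (intro Max_ge) auto
    moreover have "finite E" using E onorm_card by (auto simp: K_def)
    ultimately show False using \<open>x \<notin> E\<close> E by simp
  qed
  then show ?thesis using E onorm_card[of E] by (auto simp: K_def)
qed



lemma rows_orth:
  fixes a :: "'n::finite \<Rightarrow> real^'n"
  assumes "\<And>r. norm (a r) = 1" "\<And>r s. r \<noteq> s \<Longrightarrow> a r \<bullet> a s = 0"
  shows "orthogonal_matrix ((\<chi> r. a r) :: real^'n^'n)"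
proof -
  have "(\<chi> r. a r) ** transpose (\<chi> r. a r) = (mat 1 :: real^'n^'n)"
  proof (rule vec_eq_iff[THEN iffD2], intro allI, rule vec_eq_iff[THEN iffD2], intro allI)
    fix r s
    have "((\<chi> r. a r) ** transpose (\<chi> r. a r)) $ r $ s = a r \<bullet> a s"
      by (simp add: matrix_matrix_mult_def transpose_def inner_vec_def)
    also have "\<dots> = (mat 1 :: real^'n^'n) $ r $ s"
      using assms by (cases "r = s") (auto simp: mat_def norm_eq_1)
    finally show "((\<chi> r. a r) ** transpose (\<chi> r. a r)) $ r $ s = (mat 1 :: real^'n^'n) $ r $ s" .
  qed
  then show ?thesis unfolding orthogonal_matrix_def using matrix_left_right_inverse by blast
qed

lemma orth_complete:
  fixes w :: "'n::finite \<Rightarrow> real^'n"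
  assumes orth: "\<And>r s. r \<noteq> s \<Longrightarrow> w r \<bullet> w s = 0"
  shows "\<exists>A \<alpha>. orthogonal_matrix (A::real^'n^'n) \<and> (\<forall>r. w r = (\<alpha>::real^'n) $ r *\<^sub>R A $ r)"
proof -
  define S where "S = {r. w r \<noteq> 0}"
  define nz where "nz r = w r /\<^sub>R norm (w r)" for r
  have nz1: "norm (nz r) = 1" if "r \<in> S" for r using that by (auto simp: S_def nz_def)
  have nzo: "nz r \<bullet> nz s = 0" if "r \<noteq> s" for r s using orth[OF that] by (simp add: nz_def)
  have inj: "inj_on nz S"
  proof
    fix r s assume "r \<in> S" "s \<in> S" "nz r = nz s"
    then show "r = s" using nz1 nzo by (metis inner_eq_zero_iff norm_zero zero_neq_one)
  qed
  have on0: "onorm (nz ` S)" unfolding onorm_def pairwise_def orthogonal_def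
  proof (intro conjI ballI impI)
    show "norm x = 1" if "x \<in> nz ` S" for x using that nz1 using that nz1 by blast
    fix x y assume "x \<in> nz ` S" "y \<in> nz ` S" "x \<noteq> y"
    then obtain r s where "x = nz r" "y = nz s" "r \<noteq> s" by blast
    then show "x \<bullet> y = 0" using nzo using nzo by simp
  qed
  obtain E where E: "nz ` S \<subseteq> E" "onorm E" "card E = CARD('n)"
  proof -
    have "\<exists>x. norm x = 1 \<and> True \<and> (\<forall>e\<in>E. x \<bullet> e = 0)"
      if "onorm E" "card E < CARD('n)" for E :: "(real^'n) set"
    proof -
      from onorm_compl[OF that] obtain x where x: "x \<noteq> 0" "\<forall>e\<in>E. x \<bullet> e = 0" by blast
      show ?thesis by (rule exI[of _ "x /\<^sub>R norm x"]) (simp add: x)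
    qed
    then show ?thesis using onorm_max[of "\<lambda>_. True" "nz ` S"] on0 that by blast
  qed
  have finE: "finite E" using E onorm_card by blast
  have "card (E - nz ` S) = CARD('n) - card S"
    using E finE card_image[OF inj] by (simp add: card_Diff_subset finite_subset)
  also have "\<dots> = card (- S)"
    using card_Diff_subset[of S UNIV] by (simp add: Compl_eq_Diff_UNIV)
  finally have "card (- S) = card (E - nz ` S)" by simp
  then obtain g where g: "bij_betw g (- S) (E - nz ` S)"
    using finite_same_card_bij[of "- S" "E - nz ` S"] finE by auto
  define a where "a r = (if r \<in> S then nz r else g r)" for r
  have aE: "a r \<in> E" for r using E g by (auto simp: a_def bij_betw_def)
  have ainj: "a r \<noteq> a s" if "r \<noteq> s" for r s
  proof (cases "r \<in> S"; cases "s \<in> S")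
    assume "r \<in> S" "s \<in> S" then show ?thesis using that inj by (auto simp: a_def inj_on_def)
  next
    assume "r \<notin> S" "s \<notin> S" then show ?thesis using that g by (auto simp: a_def bij_betw_def inj_on_def)
  next
    assume "r \<in> S" "s \<notin> S"
    then have "g s \<in> E - nz ` S" using g by (auto simp: bij_betw_def)
    then show ?thesis using \<open>r \<in> S\<close> \<open>s \<notin> S\<close> by (auto simp: a_def) (metis image_eqI)
  next
    assume "r \<notin> S" "s \<in> S"
    then have "g r \<in> E - nz ` S" using g by (auto simp: bij_betw_def)
    then show ?thesis using \<open>s \<in> S\<close> \<open>r \<notin> S\<close> by (auto simp: a_def)
  qed
  have a1: "norm (a r) = 1" for r using aE E by (auto simp: onorm_def)
  have ao: "a r \<bullet> a s = 0" if "r \<noteq> s" for r s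
    using aE[of r] aE[of s] ainj[OF that] E by (auto simp: onorm_def pairwise_def orthogonal_def)
  define \<alpha> :: "real^'n" where "\<alpha> = (\<chi> r. if r \<in> S then norm (w r) else 0)"
  have "\<forall>r. w r = \<alpha> $ r *\<^sub>R (\<chi> r. a r) $ r"
    by (auto simp: \<alpha>_def a_def nz_def S_def)
  moreover have "orthogonal_matrix ((\<chi> r. a r) :: real^'n^'n)" using rows_orth[of a] a1 ao by blast
  ultimately show ?thesis by blast
qed



lemma sym_dot:
  fixes S :: "real^'n::finite^'n"
  assumes "transpose S = S"
  shows "(S *v x) \<bullet> y = x \<bullet> (S *v y)"
  by (metis assms dot_lmul_matrix vector_transpose_matrix)

lemma mv_lin: "(S::real^'n::finite^'n) *v (x + t *\<^sub>R y) = S *v x + t *\<^sub>R (S *v y)"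
  by (simp add: matrix_vector_right_distrib matrix_vector_mult_scaleR)

lemma eig_exists:
  fixes S :: "real^'n::finite^'n" and V :: "(real^'n) set"
  assumes sym: "transpose S = S" and sub: "subspace V" and nz: "V \<noteq> {0}"
    and inv: "\<And>x. x \<in> V \<Longrightarrow> S *v x \<in> V"
  shows "\<exists>x\<in>V. x \<noteq> 0 \<and> (\<exists>lam. S *v x = lam *\<^sub>R x)"
proof -
  define K where "K = V \<inter> sphere 0 1"
  define f where "f x = x \<bullet> (S *v x)" for x
  have "compact K" unfolding K_def using sub by (intro closed_Int_compact closed_subspace) auto
  obtain v where v: "v \<in> V" "v \<noteq> 0" using nz sub subspace_0 by blast
  have "v /\<^sub>R norm v \<in> K" using v sub by (auto simp: K_def subspace_scale)
  then have "K \<noteq> {}" by blast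
  have "continuous_on K f" unfolding f_def
    by (intro continuous_intros linear_continuous_on matrix_vector_mul_bounded_linear)
  obtain x where xK: "x \<in> K" and xmax: "\<And>y. y \<in> K \<Longrightarrow> f y \<le> f x"
    using continuous_attains_sup[OF \<open>compact K\<close> \<open>K \<noteq> {}\<close> \<open>continuous_on K f\<close>] by blast
  have xV: "x \<in> V" and xn: "norm x = 1" using xK by (auto simp: K_def)
  have xx: "x \<bullet> x = 1" using xn by (simp add: norm_eq_1)
  define lam where "lam = f x"
  have ortho: "y \<bullet> (S *v x) = 0" if yV: "y \<in> V" and yx: "y \<bullet> x = 0" for y
  proof -
    define c where "c = y \<bullet> (S *v x)"
    define D where "D = lam * (y \<bullet> y) - y \<bullet> (S *v y)"
    have ineq: "2 * t * c \<le> t^2 * D" for t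
    proof -
      define u where "u = x + t *\<^sub>R y"
      have uV: "u \<in> V" using xV yV sub by (simp add: u_def subspace_add subspace_scale)
      have uu: "u \<bullet> u = 1 + t^2 * (y \<bullet> y)"
        using xx yx by (simp add: u_def inner_add_left inner_add_right inner_commute power2_eq_square)
      have upos: "u \<bullet> u > 0" using uu by (simp add: add_pos_nonneg)
      then have "norm u > 0" by (simp add: norm_eq_sqrt_inner)
      then have "u /\<^sub>R norm u \<in> K" using uV sub by (auto simp: K_def subspace_scale)
      then have "f (u /\<^sub>R norm u) \<le> lam" using xmax by (simp add: lam_def)
      moreover have "f (u /\<^sub>R norm u) = f u / (u \<bullet> u)"
        by (simp add: f_def matrix_vector_mult_scaleR power2_norm_eq_inner[symmetric] power2_eq_square field_simps)
      ultimately have "f u \<le> lam * (u \<bullet> u)" using upos by (simp add: divide_le_eq)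
      moreover have "f u = lam + 2 * t * c + t^2 * (y \<bullet> (S *v y))"
      proof -
        have "x \<bullet> (S *v y) = c" using sym_dot[OF sym, of x y] by (simp add: c_def inner_commute)
        then show ?thesis
          by (simp add: f_def lam_def u_def mv_lin inner_add_left inner_add_right c_def power2_eq_square algebra_simps)
      qed
      ultimately show ?thesis using uu by (simp add: D_def algebra_simps)
    qed
    show ?thesis
    proof (rule ccontr)
      assume "\<not> ?thesis"
      then have c0: "c \<noteq> 0" by (simp add: c_def)
      define t where "t = c / (\<bar>D\<bar> + 1)"
      have pos: "\<bar>D\<bar> + 1 > 0" by simp
      have "2 * t * c \<le> t^2 * D" by (rule ineq)
      then have "(\<bar>D\<bar> + 1)^2 * (2 * t * c) \<le> (\<bar>D\<bar> + 1)^2 * (t^2 * D)"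
        by (simp add: mult_left_mono)
      moreover have tE: "t * (\<bar>D\<bar> + 1) = c" using pos by (simp add: t_def)
      moreover have "(\<bar>D\<bar> + 1)^2 * (2 * t * c) = 2 * c * (t * (\<bar>D\<bar> + 1)) * (\<bar>D\<bar> + 1)"
        by (simp add: power2_eq_square algebra_simps)
      moreover have "(\<bar>D\<bar> + 1)^2 * (t^2 * D) = (t * (\<bar>D\<bar> + 1)) * (t * (\<bar>D\<bar> + 1)) * D"
        by (simp add: power2_eq_square algebra_simps)
      ultimately have "2 * c * c * (\<bar>D\<bar> + 1) \<le> c * c * D" by (simp only:)
      moreover have "c * c > 0" using c0 by (auto simp: zero_less_mult_iff)
      moreover have "c * c * D \<le> c * c * \<bar>D\<bar>" using \<open>c * c > 0\<close> by (simp add: mult_left_mono)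
      moreover have "c * c * \<bar>D\<bar> \<ge> 0" using \<open>c * c > 0\<close> by simp
      moreover have "2 * c * c * (\<bar>D\<bar> + 1) = 2 * (c * c * \<bar>D\<bar>) + 2 * (c * c)" by (simp add: algebra_simps)
      ultimately show False by linarith
    qed
  qed
  define z where "z = S *v x - lam *\<^sub>R x"
  have zV: "z \<in> V" using xV inv sub by (simp add: z_def subspace_diff subspace_scale)
  have zx: "z \<bullet> x = 0" using xx
    by (simp add: z_def lam_def f_def inner_diff_left inner_diff_right inner_commute)
  have "z \<bullet> (S *v x) = 0" using ortho[OF zV zx] .
  then have "z \<bullet> z = 0" using zx by (simp add: z_def inner_diff_right)
  then have "S *v x = lam *\<^sub>R x" by (simp add: z_def)
  moreover have "x \<noteq> 0" using xn by auto
  ultimately show ?thesis using xV by blast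
qed



lemma common_eig:
  fixes F :: "'i \<Rightarrow> real^'n::finite^'n" and W :: "(real^'n) set"
  assumes sym: "\<And>p. transpose (F p) = F p"
    and comm: "\<And>p q. F p ** F q = F q ** F p"
    and sub: "subspace W" and nz: "W \<noteq> {0}"
    and inv: "\<And>p x. x \<in> W \<Longrightarrow> F p *v x \<in> W"
  shows "\<exists>x\<in>W. x \<noteq> 0 \<and> (\<forall>p. \<exists>lam. F p *v x = lam *\<^sub>R x)"
proof -
  define K where "K = {V. subspace V \<and> V \<subseteq> W \<and> V \<noteq> {0} \<and> (\<forall>p. \<forall>x\<in>V. F p *v x \<in> V)}"
  have "W \<in> K" using sub nz inv by (auto simp: K_def)
  then obtain V where VK: "V \<in> K" and Vmin: "\<And>V'. V' \<in> K \<Longrightarrow> dim V \<le> dim V'"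
    using ex_has_least_nat[of "\<lambda>V. V \<in> K" W dim] by blast
  have Vsub: "subspace V" and VW: "V \<subseteq> W" and Vnz: "V \<noteq> {0}" and Vinv: "\<And>p x. x \<in> V \<Longrightarrow> F p *v x \<in> V"
    using VK by (auto simp: K_def)
  have all: "\<exists>lam. \<forall>x\<in>V. F p *v x = lam *\<^sub>R x" for p
  proof -
    obtain y lam where y: "y \<in> V" "y \<noteq> 0" "F p *v y = lam *\<^sub>R y"
      using eig_exists[OF sym Vsub Vnz Vinv] by blast
    define V' where "V' = {x \<in> V. F p *v x = lam *\<^sub>R x}"
    have "subspace V'" using Vsub unfolding V'_def subspace_def
      by (auto simp: matrix_vector_right_distrib matrix_vector_mult_scaleR algebra_simps)
    moreover have "V' \<noteq> {0}" using y by (auto simp: V'_def)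
    moreover have "F q *v x \<in> V'" if "x \<in> V'" for q x
    proof -
      have "F p *v (F q *v x) = F q *v (F p *v x)" by (simp add: matrix_vector_mul_assoc comm)
      also have "\<dots> = lam *\<^sub>R (F q *v x)" using that by (simp add: V'_def matrix_vector_mult_scaleR)
      finally show ?thesis using that Vinv by (auto simp: V'_def)
    qed
    ultimately have "V' \<in> K" using VW by (auto simp: K_def V'_def)
    then have "dim V \<le> dim V'" by (rule Vmin)
    then have "V' = V" using subspace_dim_equal[OF \<open>subspace V'\<close> Vsub] by (auto simp: V'_def)
    then show ?thesis by (auto simp: V'_def)
  qed
  obtain x where "x \<in> V" "x \<noteq> 0" using Vnz Vsub subspace_0 by blast
  then show ?thesis using all VW by blast
qed

lemma joint_basis:
  fixes F :: "'i \<Rightarrow> real^'n::finite^'n"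
  assumes sym: "\<And>p. transpose (F p) = F p"
    and comm: "\<And>p q. F p ** F q = F q ** F p"
  shows "\<exists>V::real^'n^'n. orthogonal_matrix V \<and> (\<forall>p r. \<exists>lam. F p *v (V $ r) = lam *\<^sub>R V $ r)"
proof -
  define P where "P x = (\<forall>p. \<exists>lam. F p *v x = lam *\<^sub>R x)" for x
  have ext: "\<exists>x. norm x = 1 \<and> P x \<and> (\<forall>e\<in>E. x \<bullet> e = 0)"
    if E: "onorm E" "\<forall>e\<in>E. P e" "card E < CARD('n)" for E
  proof -
    define W where "W = {x. \<forall>e\<in>E. x \<bullet> e = 0}"
    have sub: "subspace W" unfolding W_def subspace_def by (auto simp: inner_add_left)
    from onorm_compl[OF E(1) E(3)] obtain x0 where "x0 \<noteq> 0" "\<forall>e\<in>E. x0 \<bullet> e = 0" by blast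
    then have nz: "W \<noteq> {0}" by (auto simp: W_def)
    have inv: "F p *v x \<in> W" if "x \<in> W" for p x
    proof -
      have "(F p *v x) \<bullet> e = 0" if "e \<in> E" for e
      proof -
        obtain lam where "F p *v e = lam *\<^sub>R e" using E(2) \<open>e \<in> E\<close> by (auto simp: P_def)
        then show ?thesis using sym_dot[OF sym, of p x e] \<open>x \<in> W\<close> \<open>e \<in> E\<close> by (simp add: W_def)
      qed
      then show ?thesis by (simp add: W_def)
    qed
    obtain x where x: "x \<in> W" "x \<noteq> 0" "\<forall>p. \<exists>lam. F p *v x = lam *\<^sub>R x"
      using common_eig[of F W, OF sym comm sub nz] inv by blast
    have "P (x /\<^sub>R norm x)" using x(3) unfolding P_def
      by (metis matrix_vector_mult_scaleR scaleR_left_commute)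
    then show ?thesis using x by (intro exI[of _ "x /\<^sub>R norm x"]) (auto simp: W_def)
  qed
  obtain E where E: "onorm E" "\<forall>e\<in>E. P e" "card E = CARD('n)"
    using onorm_max[of P "{}"] ext by (auto simp: onorm_def)
  have "finite E" using E onorm_card by blast
  then obtain g where g: "bij_betw g (UNIV::'n set) E"
    using finite_same_card_bij[of "UNIV::'n set" E] E by auto
  have gE: "g r \<in> E" for r using g by (auto simp: bij_betw_def)
  have g1: "norm (g r) = 1" for r using gE E by (auto simp: onorm_def)
  have go: "g r \<bullet> g s = 0" if "r \<noteq> s" for r s
  proof -
    have "g r \<noteq> g s" using g that by (auto simp: bij_betw_def inj_on_def)
    then show ?thesis using gE[of r] gE[of s] E by (auto simp: onorm_def pairwise_def orthogonal_def)
  qed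
  have "orthogonal_matrix ((\<chi> r. g r) :: real^'n^'n)" using rows_orth[of g] g1 go by blast
  moreover have "\<forall>p r. \<exists>lam. F p *v ((\<chi> r. g r) :: real^'n^'n) $ r = lam *\<^sub>R (\<chi> r. g r) $ r"
    using gE E(2) by (auto simp: P_def)
  ultimately show ?thesis by blast
qed



lemma orth_rows_inner:
  fixes A :: "real^'n::finite^'n"
  assumes "orthogonal_matrix A"
  shows "A $ r \<bullet> A $ s = (if r = s then 1 else 0)"
proof -
  have "(A ** transpose A) $ r $ s = A $ r \<bullet> A $ s"
    by (simp add: matrix_matrix_mult_def transpose_def inner_vec_def)
  then show ?thesis using assms by (simp add: orthogonal_matrix_def mat_def)
qed

lemma mv_inner: "((A::real^'n::finite^'n) *v x) \<bullet> y = x \<bullet> (transpose A *v y)"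
  by (metis dot_lmul_matrix vector_transpose_matrix)

lemma collin:
  fixes g h :: "real^'n::finite"
  assumes "(g \<bullet> h) * (g \<bullet> h) = (g \<bullet> g) * (h \<bullet> h)" "h \<noteq> 0"
  shows "g = ((g \<bullet> h) / (h \<bullet> h)) *\<^sub>R h"
proof -
  define c where "c = (g \<bullet> h) / (h \<bullet> h)"
  have hh: "h \<bullet> h > 0" using assms(2) by simp
  have "(g - c *\<^sub>R h) \<bullet> (g - c *\<^sub>R h) = g \<bullet> g - 2 * c * (g \<bullet> h) + c * c * (h \<bullet> h)"
    by (simp add: inner_diff_left inner_diff_right inner_commute algebra_simps)
  also have "\<dots> = g \<bullet> g - (g \<bullet> h) * (g \<bullet> h) / (h \<bullet> h)"
    using hh by (simp add: c_def field_simps)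
  also have "\<dots> = 0" using assms(1) hh by (simp add: field_simps)
  finally show ?thesis by (simp add: c_def)
qed

lemma simul_svd:
  fixes M :: "'n::finite \<Rightarrow> real^'n^'n"
  assumes sc: "slice_cond M"
  shows "\<exists>U V :: real^'n^'n. \<exists>d :: 'n \<Rightarrow> 'n \<Rightarrow> real. orthogonal_matrix U \<and> orthogonal_matrix V \<and>
           (\<forall>k r. M k *v (V $ r) = d k r *\<^sub>R U $ r)"
proof -
  define Mt where "Mt k = transpose (M k)" for k
  have s1: "Mt k ** M l = Mt l ** M k" for k l
  proof -
    have "transpose (Mt k ** M l) = Mt k ** M l" using sc by (simp add: slice_cond_def symmetric_mat_def Mt_def)
    then show ?thesis by (simp add: matrix_transpose_mul Mt_def)
  qed
  have s2: "M k ** Mt l = M l ** Mt k" for k l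
  proof -
    have "transpose (M k ** Mt l) = M k ** Mt l" using sc by (simp add: slice_cond_def symmetric_mat_def Mt_def)
    then show ?thesis by (simp add: matrix_transpose_mul Mt_def)
  qed
  define F where "F p = Mt (fst p) ** M (snd p)" for p
  have Fsym: "transpose (F p) = F p" for p
    using sc by (simp add: slice_cond_def symmetric_mat_def Mt_def F_def)
  have comm4: "Mt k ** M l ** Mt a ** M b = Mt a ** M b ** Mt k ** M l" for k l a b
  proof -
    have "Mt k ** M l ** Mt a ** M b = Mt l ** M k ** Mt a ** M b" by (simp add: s1[of k l])
    also have "\<dots> = Mt l ** (M k ** Mt a) ** M b" by (simp add: matrix_mul_assoc)
    also have "\<dots> = Mt l ** (M a ** Mt k) ** M b" by (simp only: s2[of k a])
    also have "\<dots> = Mt l ** M a ** (Mt k ** M b)" by (simp add: matrix_mul_assoc)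
    also have "\<dots> = Mt l ** M a ** (Mt b ** M k)" by (simp only: s1[of k b])
    also have "\<dots> = Mt a ** M l ** Mt b ** M k" by (simp add: matrix_mul_assoc s1[of l a])
    also have "\<dots> = Mt a ** (M l ** Mt b) ** M k" by (simp add: matrix_mul_assoc)
    also have "\<dots> = Mt a ** (M b ** Mt l) ** M k" by (simp only: s2[of l b])
    also have "\<dots> = Mt a ** M b ** (Mt l ** M k)" by (simp add: matrix_mul_assoc)
    also have "\<dots> = Mt a ** M b ** (Mt k ** M l)" by (simp only: s1[of l k])
    also have "\<dots> = Mt a ** M b ** Mt k ** M l" by (simp add: matrix_mul_assoc)
    finally show ?thesis .
  qed
  have Fcomm: "F p ** F q = F q ** F p" for p q
    using comm4[of "fst p" "snd p" "fst q" "snd q"] by (simp add: F_def matrix_mul_assoc)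
  have rank4: "F (k,l) ** F (a,b) = F (k,a) ** F (l,b)" for k l a b
  proof -
    have "F (k,l) ** F (a,b) = Mt k ** (M l ** Mt a) ** M b" by (simp add: F_def matrix_mul_assoc)
    also have "\<dots> = Mt k ** (M a ** Mt l) ** M b" by (simp only: s2[of l a])
    also have "\<dots> = F (k,a) ** F (l,b)" by (simp add: F_def matrix_mul_assoc)
    finally show ?thesis .
  qed
  obtain V :: "real^'n^'n" where V: "orthogonal_matrix V" and Veig: "\<forall>p r. \<exists>lam. F p *v (V $ r) = lam *\<^sub>R V $ r"
    using joint_basis[of F, OF Fsym Fcomm] by blast
  obtain lam where lam: "\<And>p r. F p *v (V $ r) = lam p r *\<^sub>R V $ r"
    using Veig by metis
  have vv: "V $ r \<bullet> V $ s = (if r = s then 1 else 0)" for r s using orth_rows_inner[OF V] .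
  have vnz: "V $ r \<noteq> 0" for r using vv[of r r] by auto
  define g where "g k r = M k *v (V $ r)" for k r
  have gram: "g k r \<bullet> g l s = lam (k,l) s * (if r = s then 1 else 0)" for k l r s
  proof -
    have "g k r \<bullet> g l s = V $ r \<bullet> (F (k,l) *v V $ s)"
      by (simp add: g_def mv_inner matrix_vector_mul_assoc F_def Mt_def)
    also have "\<dots> = lam (k,l) s * (if r = s then 1 else 0)" by (simp add: lam vv)
    finally show ?thesis .
  qed
  have rank: "lam (k,l) r * lam (a,b) r = lam (k,a) r * lam (l,b) r" for k l a b r
  proof -
    have "(F (k,l) ** F (a,b)) *v V $ r = (lam (k,l) r * lam (a,b) r) *\<^sub>R V $ r"
      by (simp add: matrix_vector_mul_assoc[symmetric] lam matrix_vector_mult_scaleR)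
    moreover have "(F (k,a) ** F (l,b)) *v V $ r = (lam (k,a) r * lam (l,b) r) *\<^sub>R V $ r"
      by (simp add: matrix_vector_mul_assoc[symmetric] lam matrix_vector_mult_scaleR)
    ultimately show ?thesis using rank4[of k l a b] vnz[of r] by (metis scaleR_cancel_right)
  qed
  define ex where "ex r = (\<exists>m. g m r \<noteq> 0)" for r
  define mm where "mm r = (SOME m. g m r \<noteq> 0)" for r
  define w where "w r = (if ex r then g (mm r) r else 0)" for r
  have wo: "w r \<bullet> w s = 0" if "r \<noteq> s" for r s
    using that by (simp add: w_def gram)
  obtain U :: "real^'n^'n" and \<beta> :: "real^'n" where U: "orthogonal_matrix U" and wU: "\<And>r. w r = \<beta> $ r *\<^sub>R U $ r"
    using orth_complete[of w] wo by blast
  define d where "d k r = (if ex r then (g k r \<bullet> w r) / (w r \<bullet> w r) * \<beta> $ r else 0)" for k r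
  have "M k *v (V $ r) = d k r *\<^sub>R U $ r" for k r
  proof (cases "ex r")
    case True
    have "g (mm r) r \<noteq> 0" unfolding mm_def using True someI_ex[of "\<lambda>m. g m r \<noteq> 0"] by (simp add: ex_def)
    then have wnz: "w r \<noteq> 0" and wr: "w r = g (mm r) r"
      using True unfolding w_def by auto
    have "(g k r \<bullet> w r) * (g k r \<bullet> w r) = (g k r \<bullet> g k r) * (w r \<bullet> w r)"
      unfolding wr gram using rank[where k=k and l="mm r" and a=k and b="mm r" and r=r] by simp
    then have "g k r = ((g k r \<bullet> w r) / (w r \<bullet> w r)) *\<^sub>R w r" using collin wnz by blast
    then show ?thesis using True by (simp add: g_def[symmetric] d_def wU)
  next
    case False
    then show ?thesis by (simp add: ex_def g_def d_def)
  qed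
  then show ?thesis using U V by blast
qed



lemma swap_in4:
  "(\<Sum>i\<in>A. \<Sum>a\<in>B. \<Sum>l\<in>C. \<Sum>b\<in>D. \<Sum>m\<in>E. h i a l b m) =
   (\<Sum>a\<in>B. \<Sum>l\<in>C. \<Sum>b\<in>D. \<Sum>m\<in>E. \<Sum>i\<in>A. h i a l b m)"
proof -
  have "(\<Sum>i\<in>A. \<Sum>a\<in>B. \<Sum>l\<in>C. \<Sum>b\<in>D. \<Sum>m\<in>E. h i a l b m) =
        (\<Sum>a\<in>B. \<Sum>i\<in>A. \<Sum>l\<in>C. \<Sum>b\<in>D. \<Sum>m\<in>E. h i a l b m)" by (rule sum.swap)
  also have "\<dots> = (\<Sum>a\<in>B. \<Sum>l\<in>C. \<Sum>i\<in>A. \<Sum>b\<in>D. \<Sum>m\<in>E. h i a l b m)"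
    by (rule sum.cong[OF refl], rule sum.swap)
  also have "\<dots> = (\<Sum>a\<in>B. \<Sum>l\<in>C. \<Sum>b\<in>D. \<Sum>i\<in>A. \<Sum>m\<in>E. h i a l b m)"
    by (rule sum.cong[OF refl], rule sum.cong[OF refl], rule sum.swap)
  also have "\<dots> = (\<Sum>a\<in>B. \<Sum>l\<in>C. \<Sum>b\<in>D. \<Sum>m\<in>E. \<Sum>i\<in>A. h i a l b m)"
    by (rule sum.cong[OF refl], rule sum.cong[OF refl], rule sum.cong[OF refl], rule sum.swap)
  finally show ?thesis .
qed

lemma swap3:
  "(\<Sum>m\<in>A. \<Sum>b\<in>B. \<Sum>l\<in>C. h m b l) = (\<Sum>l\<in>C. \<Sum>b\<in>B. \<Sum>m\<in>A. h m b l)"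
proof -
  have "(\<Sum>m\<in>A. \<Sum>b\<in>B. \<Sum>l\<in>C. h m b l) = (\<Sum>m\<in>A. \<Sum>l\<in>C. \<Sum>b\<in>B. h m b l)"
    by (rule sum.cong[OF refl], rule sum.swap)
  also have "\<dots> = (\<Sum>l\<in>C. \<Sum>m\<in>A. \<Sum>b\<in>B. h m b l)" by (rule sum.swap)
  also have "\<dots> = (\<Sum>l\<in>C. \<Sum>b\<in>B. \<Sum>m\<in>A. h m b l)" by (rule sum.cong[OF refl], rule sum.swap)
  finally show ?thesis .
qed

definition bet :: "'n::finite tensor3 \<Rightarrow> 'n \<Rightarrow> real^'n \<Rightarrow> real^'n \<Rightarrow> real" where
  "bet T i y z = (\<Sum>a\<in>UNIV. \<Sum>l\<in>UNIV. T $ i $ a $ l * y $ a * z $ l)"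

lemma yq:
  fixes T :: "'n::finite tensor3"
  assumes Hy: "\<And>a b l m. (\<Sum>i\<in>UNIV. T$i$a$l * T$i$b$m) = (\<Sum>i\<in>UNIV. T$i$a$m * T$i$b$l)"
  shows "(\<Sum>i\<in>UNIV. bet T i y z * bet T i y' z') = (\<Sum>i\<in>UNIV. bet T i y z' * bet T i y' z)"
proof -
  have "(\<Sum>i\<in>UNIV. bet T i y z * bet T i y' z') =
    (\<Sum>i\<in>UNIV. \<Sum>b\<in>UNIV. \<Sum>a\<in>UNIV. \<Sum>m\<in>UNIV. \<Sum>l\<in>UNIV. (T$i$a$l * T$i$b$m) * (y$a * z$l * y'$b * z'$m))"
    by (simp add: bet_def sum_distrib_left sum_distrib_right mult_ac)
  also have "\<dots> = (\<Sum>b\<in>UNIV. \<Sum>a\<in>UNIV. \<Sum>m\<in>UNIV. \<Sum>l\<in>UNIV. (\<Sum>i\<in>UNIV. T$i$a$l * T$i$b$m) * (y$a * z$l * y'$b * z'$m))"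
    by (subst swap_in4) (simp add: sum_distrib_right)
  also have "\<dots> = (\<Sum>b\<in>UNIV. \<Sum>a\<in>UNIV. \<Sum>m\<in>UNIV. \<Sum>l\<in>UNIV. (\<Sum>i\<in>UNIV. T$i$a$m * T$i$b$l) * (y$a * z$l * y'$b * z'$m))"
    by (simp add: Hy)
  also have "\<dots> = (\<Sum>b\<in>UNIV. \<Sum>a\<in>UNIV. \<Sum>l\<in>UNIV. \<Sum>m\<in>UNIV. (\<Sum>i\<in>UNIV. T$i$a$m * T$i$b$l) * (y$a * z$l * y'$b * z'$m))"
    by (rule sum.cong[OF refl], rule sum.cong[OF refl], rule sum.swap)
  also have "\<dots> = (\<Sum>i\<in>UNIV. \<Sum>b\<in>UNIV. \<Sum>a\<in>UNIV. \<Sum>l\<in>UNIV. \<Sum>m\<in>UNIV. (T$i$a$m * T$i$b$l) * (y$a * z$l * y'$b * z'$m))"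
    by (subst swap_in4) (simp add: sum_distrib_right)
  also have "\<dots> = (\<Sum>i\<in>UNIV. bet T i y z' * bet T i y' z)"
    by (simp add: bet_def sum_distrib_left sum_distrib_right mult_ac)
  finally show ?thesis .
qed



lemma tmv_comp: "(transpose (V::real^'n::finite^'n) *v w) $ m = (\<Sum>r\<in>UNIV. V$r$m * w$r)"
  by (simp add: matrix_vector_mult_def transpose_def)

lemma mv_comp: "((M::real^'n::finite^'n) *v x) $ r = (\<Sum>i\<in>UNIV. M$r$i * x$i)"
  by (simp add: matrix_vector_mult_def)

lemma rev_dir:
  fixes T :: "'n::finite tensor3"
  assumes sx: "slice_cond (xslice T)" and sy: "slice_cond (yslice T)"
  shows "T \<in> OT"
proof -
  obtain U V :: "real^'n^'n" and d where U: "orthogonal_matrix U" and V: "orthogonal_matrix V"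
    and svd: "\<And>k r. xslice T k *v (V $ r) = d k r *\<^sub>R U $ r"
    using simul_svd[OF sx] by blast
  have E1: "(\<Sum>m\<in>UNIV. T$i$j$m * V$r$m) = d i r * U$r$j" for i j r
  proof -
    have "(xslice T i *v V$r)$j = (d i r *\<^sub>R U$r)$j" using svd by simp
    then show ?thesis by (simp add: matrix_vector_mult_def xslice_def)
  qed
  have uu: "U $ p \<bullet> U $ q = (if p = q then 1 else 0)" for p q using orth_rows_inner[OF U] .
  have betz: "bet T i y z = (\<Sum>a\<in>UNIV. y$a * (\<Sum>l\<in>UNIV. T$i$a$l * z$l))" for i y z
    by (simp add: bet_def sum_distrib_left mult_ac)
  have betUV: "bet T i (U$p) (V$q) = (if p = q then d i p else 0)" for i p q
  proof -
    have "bet T i (U$p) (V$q) = (\<Sum>a\<in>UNIV. U$p$a * (d i q * U$q$a))" by (simp add: betz E1)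
    also have "\<dots> = d i q * (U$p \<bullet> U$q)" by (simp add: inner_vec_def sum_distrib_left mult_ac)
    finally show ?thesis by (simp add: uu)
  qed
  have Hy: "(\<Sum>i\<in>UNIV. T$i$a$l * T$i$b$m) = (\<Sum>i\<in>UNIV. T$i$a$m * T$i$b$l)" for a b l m
  proof -
    let ?M = "transpose (yslice T a) ** yslice T b"
    have "transpose ?M = ?M" using sy by (simp add: slice_cond_def symmetric_mat_def)
    then have "transpose ?M $ l $ m = ?M $ l $ m" by simp
    then show ?thesis by (simp add: transpose_def matrix_matrix_mult_def yslice_def)
  qed
  have b3: "(\<Sum>i\<in>UNIV. d i p * d i q) = 0" if "p \<noteq> q" for p q
    using yq[OF Hy, of "U$p" "V$p" "U$q" "V$q"] that by (simp add: betUV)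
  define w where "w p = (\<chi> i. d i p)" for p
  have "w p \<bullet> w q = 0" if "p \<noteq> q" for p q using b3[OF that] by (simp add: w_def inner_vec_def)
  then obtain A :: "real^'n^'n" and \<alpha> :: "real^'n" where A: "orthogonal_matrix A" and wA: "\<And>p. w p = \<alpha> $ p *\<^sub>R A $ p"
    using orth_complete[of w] by blast
  have dA: "d i p = \<alpha> $ p * A $ p $ i" for i p
  proof -
    have "w p $ i = (\<alpha> $ p *\<^sub>R A $ p) $ i" using wA by simp
    then show ?thesis by (simp add: w_def)
  qed
  have main: "trilin T x y z = diag_form \<alpha> (A *v x) (U *v y) (V *v z)" for x y z
  proof -
    define v where "v = V *v z"
    have zv: "z $ m = (\<Sum>r\<in>UNIV. V$r$m * v$r)" for m
    proof -
      have "transpose V *v v = z" using V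
        by (simp add: v_def matrix_vector_mul_assoc orthogonal_matrix_def)
      then show ?thesis by (metis tmv_comp)
    qed
    have G1: "(\<Sum>m\<in>UNIV. T$i$j$m * z$m) = (\<Sum>r\<in>UNIV. v$r * (d i r * U$r$j))" for i j
    proof -
      have "(\<Sum>m\<in>UNIV. T$i$j$m * z$m) = (\<Sum>m\<in>UNIV. \<Sum>r\<in>UNIV. v$r * (T$i$j$m * V$r$m))"
        by (simp add: zv sum_distrib_left mult_ac)
      also have "\<dots> = (\<Sum>r\<in>UNIV. v$r * (\<Sum>m\<in>UNIV. T$i$j$m * V$r$m))"
        by (subst sum.swap) (simp add: sum_distrib_left)
      finally show ?thesis by (simp add: E1)
    qed
    have "trilin T x y z = (\<Sum>i\<in>UNIV. \<Sum>j\<in>UNIV. x$i * y$j * (\<Sum>m\<in>UNIV. T$i$j$m * z$m))"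
      by (simp add: trilin_def sum_distrib_left mult_ac)
    also have "\<dots> = (\<Sum>i\<in>UNIV. \<Sum>j\<in>UNIV. \<Sum>r\<in>UNIV. x$i * y$j * (v$r * (d i r * U$r$j)))"
      by (simp add: G1 sum_distrib_left)
    also have "\<dots> = (\<Sum>r\<in>UNIV. \<Sum>j\<in>UNIV. \<Sum>i\<in>UNIV. x$i * y$j * (v$r * (d i r * U$r$j)))"
      by (rule swap3)
    also have "\<dots> = (\<Sum>r\<in>UNIV. \<Sum>i\<in>UNIV. \<Sum>j\<in>UNIV. x$i * y$j * (v$r * (d i r * U$r$j)))"
      by (rule sum.cong[OF refl], rule sum.swap)
    also have "\<dots> = diag_form \<alpha> (A *v x) (U *v y) v"
      by (simp add: diag_form_def mv_comp dA sum_distrib_left sum_distrib_right mult_ac)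
    also have "\<dots> = diag_form \<alpha> (A *v x) (U *v y) (V *v z)" by (simp add: v_def)
    finally show ?thesis .
  qed
  show ?thesis unfolding OT_def using A U V main by blast
qed



definition isf :: "'n::finite tensor3 \<Rightarrow> real^'n^'n \<Rightarrow> real^'n^'n \<Rightarrow> real^'n^'n \<Rightarrow> real^'n \<Rightarrow> bool" where
  "isf T A B C \<alpha> \<longleftrightarrow> (\<forall>i j k. T$i$j$k = (\<Sum>r\<in>UNIV. \<alpha>$r * A$r$i * B$r$j * C$r$k))"

lemma orth_sum:
  fixes C :: "real^'n::finite^'n"
  assumes "orthogonal_matrix C"
  shows "(\<Sum>m\<in>UNIV. (\<Sum>r\<in>UNIV. a r * C$r$m) * (\<Sum>s\<in>UNIV. b s * C$s$m)) = (\<Sum>r\<in>UNIV. a r * b r)"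
proof -
  define va :: "real^'n" where "va = (\<chi> r. a r)"
  define vb :: "real^'n" where "vb = (\<chi> r. b r)"
  have "(\<Sum>m\<in>UNIV. (\<Sum>r\<in>UNIV. a r * C$r$m) * (\<Sum>s\<in>UNIV. b s * C$s$m)) =
        (transpose C *v va) \<bullet> (transpose C *v vb)"
    unfolding inner_vec_def tmv_comp by (simp add: va_def vb_def mult_ac)
  also have "\<dots> = va \<bullet> (transpose (transpose C) *v (transpose C *v vb))"
    by (rule mv_inner)
  also have "\<dots> = va \<bullet> ((C ** transpose C) *v vb)"
    by (simp only: transpose_transpose matrix_vector_mul_assoc)
  also have "\<dots> = va \<bullet> vb" using assms by (simp add: orthogonal_matrix_def)
  also have "\<dots> = (\<Sum>r\<in>UNIV. a r * b r)" by (simp add: inner_vec_def va_def vb_def)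
  finally show ?thesis .
qed

lemma xentry:
  assumes "isf T A B C \<alpha>" "orthogonal_matrix C"
  shows "(xslice T k ** transpose (xslice T l))$j$j' =
         (\<Sum>r\<in>UNIV. (\<alpha>$r*A$r$k*B$r$j)*(\<alpha>$r*A$r$l*B$r$j'))"
proof -
  have "(xslice T k ** transpose (xslice T l))$j$j' = (\<Sum>m\<in>UNIV. T$k$j$m * T$l$j'$m)"
    by (simp add: matrix_matrix_mult_def transpose_def xslice_def)
  also have "\<dots> = (\<Sum>m\<in>UNIV. (\<Sum>r\<in>UNIV. (\<alpha>$r*A$r$k*B$r$j) * C$r$m) * (\<Sum>s\<in>UNIV. (\<alpha>$s*A$s$l*B$s$j') * C$s$m))"
    using assms(1) by (simp add: isf_def)
  also have "\<dots> = (\<Sum>r\<in>UNIV. (\<alpha>$r*A$r$k*B$r$j)*(\<alpha>$r*A$r$l*B$r$j'))"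
    by (rule orth_sum[OF assms(2)])
  finally show ?thesis .
qed

lemma xc1:
  assumes "isf T A B C \<alpha>" "orthogonal_matrix C"
  shows "symmetric_mat (xslice T k ** transpose (xslice T l))"
  unfolding symmetric_mat_def
proof (rule vec_eq_iff[THEN iffD2], intro allI, rule vec_eq_iff[THEN iffD2], intro allI)
  fix j j'
  show "transpose (xslice T k ** transpose (xslice T l)) $ j $ j' = (xslice T k ** transpose (xslice T l)) $ j $ j'"
    using xentry[OF assms, of k l j' j] xentry[OF assms, of k l j j']
    by (simp add: transpose_def mult_ac)
qed

lemma xcond:
  assumes "isf T A B C \<alpha>" "orthogonal_matrix B" "orthogonal_matrix C"
  shows "slice_cond (xslice T)"
proof -
  define T1 :: "'a tensor3" where "T1 = (\<chi> i j l. T$i$l$j)"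
  have "isf T1 A C B \<alpha>" using assms(1) by (simp add: isf_def T1_def mult_ac)
  then have s1: "symmetric_mat (xslice T1 k ** transpose (xslice T1 l))" for k l using xc1 assms(2) by blast
  have "xslice T1 k = transpose (xslice T k)" for k
    by (simp add: xslice_def T1_def transpose_def)
  then have "symmetric_mat (transpose (xslice T k) ** xslice T l)" for k l using s1[of k l] by simp
  then show ?thesis unfolding slice_cond_def using xc1[OF assms(1,3)] by blast
qed

lemma fwd_dir:
  fixes T :: "'n::finite tensor3"
  assumes "T \<in> OT"
  shows "slice_cond (xslice T) \<and> slice_cond (yslice T) \<and> slice_cond (zslice T)"
proof -
  obtain A B C :: "real^'n^'n" and \<alpha> :: "real^'n" where A: "orthogonal_matrix A" and B: "orthogonal_matrix B"
    and C: "orthogonal_matrix C" and eq: "\<And>x y z. trilin T x y z = diag_form \<alpha> (A *v x) (B *v y) (C *v z)"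
    using assms unfolding OT_def by blast
  have axc: "axis i (1::real) $ i' = (if i' = i then 1 else 0)" for i i' :: 'n
    by (simp add: axis_def)
  have md: "(x::real) * (if c then 1 else 0) = (if c then x else 0)" for x c by simp
  have ax: "(M *v axis i (1::real)) $ r = M $ r $ i" for M :: "real^'n^'n" and i r
    by (simp add: matrix_vector_mult_def axc md)
  have "T$i$j$k = trilin T (axis i 1) (axis j 1) (axis k 1)" for i j k
    by (simp add: trilin_def axc md)
  then have isf: "isf T A B C \<alpha>" using eq by (simp add: isf_def diag_form_def ax)
  define T2 :: "'n tensor3" where "T2 = (\<chi> k i l. T$i$k$l)"
  define T3 :: "'n tensor3" where "T3 = (\<chi> k i j. T$i$j$k)"
  have "isf T2 B A C \<alpha>" using isf by (simp add: isf_def T2_def mult_ac)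
  moreover have "yslice T = xslice T2" by (simp add: fun_eq_iff yslice_def xslice_def T2_def)
  ultimately have y: "slice_cond (yslice T)" using xcond A C by metis
  have "isf T3 C A B \<alpha>" using isf by (simp add: isf_def T3_def mult_ac)
  moreover have "zslice T = xslice T3" by (simp add: fun_eq_iff zslice_def xslice_def T3_def)
  ultimately have z: "slice_cond (zslice T)" using xcond A B by metis
  show ?thesis using xcond[OF isf B C] y z by blast
qed

theorem theorem35:
  fixes T :: "'n::finite tensor3"
  shows "T \<in> OT \<longleftrightarrow>
         (slice_cond (xslice T) \<and> slice_cond (yslice T) \<and> slice_cond (zslice T))"
  using fwd_dir rev_dir by blast


end
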